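(* Let $q\ge 2$, $n\ge 1$ and $d_Z\ge 1$ be integers, and let ${\bf c}_1,\dots,{\bf c}_m$ be distinct strings in $\{0,1,\dots,q-1\}^n$. Let $A$ be the real matrix with $m$ columns (indexed by $k=1,\dots,m$) whose rows are: one row with all entries equal to $1$; and, for every ${\bf z}\in\{0,\dots,q-1\}^n$ with $1\le \mathrm{wt}({\bf z})\le d_Z-1$, two rows $({\bf z},0)$ and $({\bf z},1)$ with entries $A_{({\bf z},0),k}=\mathrm{Re}\,\langle {\bf c}_k|Z^{\bf z}|{\bf c}_k\rangle=\cos(2\pi\,{\bf z}^T{\bf c}_k/q)$ and $A_{({\bf z},1),k}=\mathrm{Im}\,\langle {\bf c}_k|Z^{\bf z}|{\bf c}_k\rangle=\sin(2\pi\,{\bf z}^T{\bf c}_k/q)$. Let ${\bf x}=(x_1,\dots,x_m)^T$ be a nonzero real vector with $A{\bf x}=0$, and define $x_k^+=\max\{x_k,0\}$, $x_k^-=\max\{-x_k,0\}$, $x=\sum_{k=1}^m x_k^+$, and $$|0_L\rangle=\frac{1}{\sqrt{x}}\sum_{k=1}^m\sqrt{x_k^+}\,|{\bf c}_k\rangle,\qquad |1_L\rangle=\frac{1}{\sqrt{x}}\sum_{k=1}^m\sqrt{x_k^-}\,|{\bf c}_k\rangle.$$ Then $\langle 0_L|P|0_L\rangle=\langle 1_L|P|1_L\rangle$ for every diagonal Pauli operator $P=Z^{\bf z}$ with $\mathrm{wt}({\bf z})\le d_Z-1$.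
   Context: Let $\omega=e^{2\pi i/q}$. On $\mathbb{C}^q$ with orthonormal basis $|0\rangle,\dots,|q-1\rangle$, define the generalized Pauli matrices $Z=\sum_{j=0}^{q-1}\omega^j|j\rangle\langle j|$ and $X=\sum_{j\in\mathbb{Z}_q}|j\rangle\langle j+1|$ (indices mod $q$). For ${\bf z}=(z_1,\dots,z_n)$, $Z^{\bf z}=Z^{z_1}\otimes\cdots\otimes Z^{z_n}$ is the diagonal Pauli operator of weight $\mathrm{wt}({\bf z})$, the Hamming weight (number of nonzero entries). For a string ${\bf c}=(c_1,\dots,c_n)$, $|{\bf c}\rangle=|c_1\rangle\otimes\cdots\otimes|c_n\rangle$, and ${\bf z}^T{\bf c}=\sum_i z_ic_i$. *)

theory Defs
  imports Complex_Main
begin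

text \<open>Strings in {0,...,q-1}^n are functions nat => nat with values < q on {0..<n}
  and value 0 outside (canonical representatives).\<close>
definition strings :: "nat \<Rightarrow> nat \<Rightarrow> (nat \<Rightarrow> nat) set" where
  "strings q n = {c. (\<forall>i<n. c i < q) \<and> (\<forall>i\<ge>n. c i = 0)}"

definition wt :: "nat \<Rightarrow> (nat \<Rightarrow> nat) \<Rightarrow> nat" where
  "wt n z = card {i\<in>{..<n}. z i \<noteq> 0}"

definition dotp :: "nat \<Rightarrow> (nat \<Rightarrow> nat) \<Rightarrow> (nat \<Rightarrow> nat) \<Rightarrow> nat" where
  "dotp n z c = (\<Sum>i<n. z i * c i)"

definition omega :: "nat \<Rightarrow> complex" where
  "omega q = exp (2 * pi * \<i> / of_nat q)"

text \<open>Vectors of (C^q)^{\<otimes> n} as functions on basis strings.\<close>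
definition ket :: "(nat \<Rightarrow> nat) \<Rightarrow> (nat \<Rightarrow> nat) \<Rightarrow> complex" where
  "ket c = (\<lambda>b. if b = c then 1 else 0)"

text \<open>Z^z = Z^{z_1} \<otimes> ... \<otimes> Z^{z_n}, acting diagonally: Z^z |b> = prod_i omega^(z_i b_i) |b>.\<close>
definition Zop :: "nat \<Rightarrow> nat \<Rightarrow> (nat \<Rightarrow> nat) \<Rightarrow> ((nat \<Rightarrow> nat) \<Rightarrow> complex) \<Rightarrow> ((nat \<Rightarrow> nat) \<Rightarrow> complex)" where
  "Zop q n z \<psi> = (\<lambda>b. (\<Prod>i<n. omega q ^ (z i * b i)) * \<psi> b)"

definition braket :: "nat \<Rightarrow> nat \<Rightarrow> ((nat \<Rightarrow> nat) \<Rightarrow> complex) \<Rightarrow> ((nat \<Rightarrow> nat) \<Rightarrow> complex) \<Rightarrow> complex" where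
  "braket q n \<psi> \<phi> = (\<Sum>b\<in>strings q n. cnj (\<psi> b) * \<phi> b)"

text \<open>Rows of the matrix A: None is the all-ones row; Some (z, False) / Some (z, True)
  are the rows (z,0) / (z,1) for 1 <= wt z <= d_Z - 1.\<close>
definition Arows :: "nat \<Rightarrow> nat \<Rightarrow> nat \<Rightarrow> ((nat \<Rightarrow> nat) \<times> bool) option set" where
  "Arows q n dZ = insert None
     {Some (z, b) | z b. z \<in> strings q n \<and> 1 \<le> wt n z \<and> wt n z \<le> dZ - 1}"

definition Aent :: "nat \<Rightarrow> nat \<Rightarrow> (nat \<Rightarrow> nat \<Rightarrow> nat) \<Rightarrow> ((nat \<Rightarrow> nat) \<times> bool) option \<Rightarrow> nat \<Rightarrow> real" where
  "Aent q n c r k = (case r of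
      None \<Rightarrow> 1
    | Some (z, False) \<Rightarrow> cos (2 * pi * real (dotp n z (c k)) / real q)
    | Some (z, True) \<Rightarrow> sin (2 * pi * real (dotp n z (c k)) / real q))"

definition pospart :: "real \<Rightarrow> real" where "pospart t = max t 0"
definition negpart :: "real \<Rightarrow> real" where "negpart t = max (- t) 0"

definition logical0 :: "nat \<Rightarrow> (nat \<Rightarrow> nat \<Rightarrow> nat) \<Rightarrow> (nat \<Rightarrow> real) \<Rightarrow> (nat \<Rightarrow> nat) \<Rightarrow> complex" where
  "logical0 m c x = (\<lambda>b. complex_of_real (1 / sqrt (\<Sum>k<m. pospart (x k)))
      * (\<Sum>k<m. complex_of_real (sqrt (pospart (x k))) * ket (c k) b))"

definition logical1 :: "nat \<Rightarrow> (nat \<Rightarrow> nat \<Rightarrow> nat) \<Rightarrow> (nat \<Rightarrow> real) \<Rightarrow> (nat \<Rightarrow> nat) \<Rightarrow> complex" where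
  "logical1 m c x = (\<lambda>b. complex_of_real (1 / sqrt (\<Sum>k<m. pospart (x k)))
      * (\<Sum>k<m. complex_of_real (sqrt (negpart (x k))) * ket (c k) b))"

end

theory Submission
  imports Defs "HOL-Library.FuncSet"
begin

lemma strings_finite: "finite (strings q n)"
proof -
  have "strings q n \<subseteq> (\<lambda>f i. if i < n then f i else 0) ` (PiE {..<n} (\<lambda>_. {..<q}))"
  proof
    fix c assume c: "c \<in> strings q n"
    have "c = (\<lambda>i. if i < n then restrict c {..<n} i else 0)"
      using c by (auto simp: strings_def fun_eq_iff restrict_def)
    moreover have "restrict c {..<n} \<in> PiE {..<n} (\<lambda>_. {..<q})"
      using c by (auto simp: strings_def)
    ultimately show "c \<in> (\<lambda>f i. if i < n then f i else 0) ` (PiE {..<n} (\<lambda>_. {..<q}))"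
      by blast
  qed
  moreover have "finite (PiE {..<n} (\<lambda>_. {..<q::nat}))" by (rule finite_PiE) auto
  ultimately show ?thesis using finite_subset by blast
qed

lemma psi_at:
  fixes m l :: nat
  assumes "inj_on c {..<m}" "l < m"
  shows "(\<Sum>k<m. a k * ket (c k) (c l)) = (a l :: complex)"
proof -
  have "(\<Sum>k<m. a k * ket (c k) (c l)) = (\<Sum>k<m. if k = l then a k else 0)"
    using assms by (intro sum.cong) (auto simp: ket_def inj_on_def)
  also have "\<dots> = a l" using assms(2) by (subst sum.delta) auto
  finally show ?thesis .
qed

lemma braket_diag:
  fixes m :: nat
  assumes fin: "finite S" and cS: "\<forall>k<m. c k \<in> S" and inj: "inj_on c {..<m}"
  shows "(\<Sum>b\<in>S. cnj (\<Sum>k<m. a k * ket (c k) b) * (g b * (\<Sum>k<m. a k * ket (c k) b)))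
       = (\<Sum>l<m. cnj (a l) * a l * g (c l))"
proof -
  let ?psi = "\<lambda>b. (\<Sum>k<m. a k * ket (c k) b)"
  have "(\<Sum>b\<in>S. cnj (?psi b) * (g b * ?psi b))
      = (\<Sum>b\<in>S. \<Sum>l<m. if b = c l then cnj (?psi b) * g b * a l else 0)"
  proof (intro sum.cong refl)
    fix b
    have "cnj (?psi b) * (g b * ?psi b) = (\<Sum>l<m. (cnj (?psi b) * g b) * (a l * ket (c l) b))"
      by (simp only: sum_distrib_left mult.assoc)
    also have "\<dots> = (\<Sum>l<m. if b = c l then cnj (?psi b) * g b * a l else 0)"
      by (intro sum.cong refl) (simp add: ket_def)
    finally show "cnj (?psi b) * (g b * ?psi b) = (\<Sum>l<m. if b = c l then cnj (?psi b) * g b * a l else 0)" .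
  qed
  also have "\<dots> = (\<Sum>l<m. \<Sum>b\<in>S. if b = c l then cnj (?psi b) * g b * a l else 0)"
    by (rule sum.swap)
  also have "\<dots> = (\<Sum>l<m. cnj (?psi (c l)) * g (c l) * a l)"
    using fin cS by (intro sum.cong refl) (simp add: sum.delta)
  also have "\<dots> = (\<Sum>l<m. cnj (a l) * a l * g (c l))"
    using inj by (intro sum.cong refl) (simp add: psi_at)
  finally show ?thesis .
qed

lemma sqsq: "p \<ge> 0 \<Longrightarrow> cnj (complex_of_real (N * sqrt p)) * complex_of_real (N * sqrt p) * w
   = complex_of_real (N * N * p) * w"
proof -
  assume p: "p \<ge> 0"
  have "cnj (complex_of_real (N * sqrt p)) * complex_of_real (N * sqrt p)
     = complex_of_real ((N * sqrt p) * (N * sqrt p))" by simp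
  also have "(N * sqrt p) * (N * sqrt p) = N * N * (sqrt p * sqrt p)" by (simp add: algebra_simps)
  also have "sqrt p * sqrt p = p" using p by simp
  finally show ?thesis by simp
qed

theorem lemma1:
  fixes q n dZ m :: nat and c :: "nat \<Rightarrow> nat \<Rightarrow> nat" and x :: "nat \<Rightarrow> real"
  assumes "q \<ge> 2" and "n \<ge> 1" and "dZ \<ge> 1"
    and "\<forall>k<m. c k \<in> strings q n"
    and "inj_on c {..<m}"
    and "\<exists>k<m. x k \<noteq> 0"
    and "\<forall>r\<in>Arows q n dZ. (\<Sum>k<m. Aent q n c r k * x k) = 0"
  shows "\<forall>z\<in>strings q n. wt n z \<le> dZ - 1 \<longrightarrow>
     braket q n (logical0 m c x) (Zop q n z (logical0 m c x))
   = braket q n (logical1 m c x) (Zop q n z (logical1 m c x))"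
proof (intro ballI impI)
  fix z assume zS: "z \<in> strings q n" and wz: "wt n z \<le> dZ - 1"
  define N where "N = 1 / sqrt (\<Sum>k<m. pospart (x k))"
  define g where "g = (\<lambda>b. \<Prod>i<n. omega q ^ (z i * b i))"
  have ph: "g (c k) = complex_of_real (cos (2 * pi * real (dotp n z (c k)) / real q))
      + \<i> * complex_of_real (sin (2 * pi * real (dotp n z (c k)) / real q))" for k
  proof -
    have "g (c k) = omega q ^ dotp n z (c k)"
      by (simp add: g_def dotp_def power_sum)
    also have "\<dots> = exp (of_nat (dotp n z (c k)) * (2 * pi * \<i> / of_nat q))"
      by (simp only: omega_def exp_of_nat_mult)
    also have "\<dots> = cis (2 * pi * real (dotp n z (c k)) / real q)"
      by (simp add: cis_conv_exp mult_ac)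
    finally show ?thesis by (simp add: cis.ctr Complex_eq)
  qed
  have cos0: "(\<Sum>k<m. cos (2 * pi * real (dotp n z (c k)) / real q) * x k) = 0"
   and sin0: "(\<Sum>k<m. sin (2 * pi * real (dotp n z (c k)) / real q) * x k) = 0"
  proof -
    have "(\<Sum>k<m. cos (2 * pi * real (dotp n z (c k)) / real q) * x k) = 0
        \<and> (\<Sum>k<m. sin (2 * pi * real (dotp n z (c k)) / real q) * x k) = 0"
    proof (cases "wt n z = 0")
      case True
      have "{i\<in>{..<n}. z i \<noteq> 0} = {}" using True by (simp add: wt_def)
      hence "\<forall>k. dotp n z (c k) = 0" by (auto simp: dotp_def)
      moreover have "(\<Sum>k<m. x k) = 0"
        using assms(7) by (auto simp: Arows_def Aent_def)
      ultimately show ?thesis by simp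
    next
      case False
      hence "Some (z, False) \<in> Arows q n dZ" "Some (z, True) \<in> Arows q n dZ"
        using zS wz by (auto simp: Arows_def)
      thus ?thesis using assms(7) by (fastforce simp: Aent_def)
    qed
    thus "(\<Sum>k<m. cos (2 * pi * real (dotp n z (c k)) / real q) * x k) = 0"
         "(\<Sum>k<m. sin (2 * pi * real (dotp n z (c k)) / real q) * x k) = 0" by auto
  qed
  have key: "(\<Sum>k<m. complex_of_real (x k) * g (c k)) = 0"
  proof -
    have "(\<Sum>k<m. complex_of_real (x k) * g (c k))
       = complex_of_real (\<Sum>k<m. cos (2 * pi * real (dotp n z (c k)) / real q) * x k)
         + \<i> * complex_of_real (\<Sum>k<m. sin (2 * pi * real (dotp n z (c k)) / real q) * x k)"
      by (simp add: ph sum.distrib sum_distrib_left algebra_simps)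
    thus ?thesis using cos0 sin0 by simp
  qed
  have fin: "finite (strings q n)" by (rule strings_finite)
  have L0: "braket q n (logical0 m c x) (Zop q n z (logical0 m c x))
      = (\<Sum>l<m. complex_of_real (N * N * pospart (x l)) * g (c l))"
  proof -
    have e: "logical0 m c x = (\<lambda>b. \<Sum>k<m. complex_of_real (N * sqrt (pospart (x k))) * ket (c k) b)"
      by (simp add: logical0_def N_def sum_distrib_left mult.assoc)
    show ?thesis
      unfolding braket_def Zop_def e g_def[symmetric]
      apply (subst braket_diag[OF fin assms(4) assms(5)])
      apply (intro sum.cong refl)
      unfolding g_def by (rule sqsq) (simp add: pospart_def)
  qed
  have L1: "braket q n (logical1 m c x) (Zop q n z (logical1 m c x))
      = (\<Sum>l<m. complex_of_real (N * N * negpart (x l)) * g (c l))"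
  proof -
    have e: "logical1 m c x = (\<lambda>b. \<Sum>k<m. complex_of_real (N * sqrt (negpart (x k))) * ket (c k) b)"
      by (simp add: logical1_def N_def sum_distrib_left mult.assoc)
    show ?thesis
      unfolding braket_def Zop_def e g_def[symmetric]
      apply (subst braket_diag[OF fin assms(4) assms(5)])
      apply (intro sum.cong refl)
      unfolding g_def by (rule sqsq) (simp add: negpart_def)
  qed
  have "(\<Sum>l<m. complex_of_real (N * N * pospart (x l)) * g (c l))
      - (\<Sum>l<m. complex_of_real (N * N * negpart (x l)) * g (c l))
      = complex_of_real (N * N) * (\<Sum>k<m. complex_of_real (x k) * g (c k))"
    unfolding sum_subtractf[symmetric] sum_distrib_left
  proof (intro sum.cong refl)
    fix l
    have "complex_of_real (pospart (x l)) - complex_of_real (negpart (x l)) = complex_of_real (x l)"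
      by (cases "x l \<ge> 0") (auto simp: pospart_def negpart_def)
    then show "complex_of_real (N * N * pospart (x l)) * g (c l) - complex_of_real (N * N * negpart (x l)) * g (c l)
      = complex_of_real (N * N) * (complex_of_real (x l) * g (c l))"
      by (metis left_diff_distrib mult.assoc of_real_mult right_diff_distrib)
  qed
  thus "braket q n (logical0 m c x) (Zop q n z (logical0 m c x))
   = braket q n (logical1 m c x) (Zop q n z (logical1 m c x))"
    using key L0 L1 by simp
qed

end
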